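(* Let $ABC$ be a nondegenerate triangle whose circumcenter $O$ does not lie on any of the lines $BC$, $CA$, $AB$ (i.e. $ABC$ is not right-angled). If $XYZ$ is a Miquel triangle of $P=O$ relative to $ABC$, then $O$ is the orthocenter of triangle $XYZ$.
   Context: Miquel triangle: given a triangle $ABC$ and a point $P$ not on the lines $BC,CA,AB$, a triangle $XYZ$ with $X$ on line $BC$, $Y$ on line $CA$, $Z$ on line $AB$ is called a Miquel triangle of $P$ relative to $ABC$ if $P$ lies on each of the three circles through $A,Y,Z$, through $B,Z,X$, and through $C,X,Y$. *)

theory Defs
  imports "HOL-Analysis.Analysis"
begin

text \<open>Points of the Euclidean plane are modelled as vectors in real^2.
  Line through two distinct points U, V: affine hull {U, V}.\<close>

definition on_circle_through :: "real^2 \<Rightarrow> real^2 \<Rightarrow> real^2 \<Rightarrow> real^2 \<Rightarrow> bool" where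
  "on_circle_through P U V W \<longleftrightarrow> \<not> collinear {U, V, W} \<and>
     (\<exists>c. dist c U = dist c V \<and> dist c U = dist c W \<and> dist c U = dist c P)"

definition miquel_triangle ::
  "real^2 \<Rightarrow> real^2 \<Rightarrow> real^2 \<Rightarrow> real^2 \<Rightarrow> real^2 \<Rightarrow> real^2 \<Rightarrow> real^2 \<Rightarrow> bool" where
  "miquel_triangle P A B C X Y Z \<longleftrightarrow>
     \<not> collinear {X, Y, Z} \<and>
     X \<in> affine hull {B, C} \<and> Y \<in> affine hull {C, A} \<and> Z \<in> affine hull {A, B} \<and>
     on_circle_through P A Y Z \<and> on_circle_through P B Z X \<and> on_circle_through P C X Y"

definition is_orthocenter :: "real^2 \<Rightarrow> real^2 \<Rightarrow> real^2 \<Rightarrow> real^2 \<Rightarrow> bool" where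
  "is_orthocenter H X Y Z \<longleftrightarrow> \<not> collinear {X, Y, Z} \<and>
     inner (H - X) (Y - Z) = 0 \<and> inner (H - Y) (Z - X) = 0 \<and> inner (H - Z) (X - Y) = 0"

end

theory Submission
  imports Defs
begin

lemma key_core:
  fixes al be ga r La Lb Lc ws wu wp :: real
  assumes "be*Lc+ga*Lb = 2*r" "al*Lc+ga*La = 2*r" "al*Lb+be*La = 2*r"
   "be*(1-wu)*Lc + ga*(1-ws)*Lb = r" "al*wu*Lc + ga*(1-wp)*La = r" "be*wp*La + al*ws*Lb = r"
  shows "al*Lb*Lc*(ws*(Lc-La+wp*(La+Lb-Lc)) - wu*(Lc + wp*(Lb-La-Lc))) = 0"
  using assms by algebra

lemma key_core2:
  fixes al be ga r ab bc ca ws wu wp :: real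
  assumes "be*(2*r-2*ab)+ga*(2*r-2*ca) = 2*r" "al*(2*r-2*ab)+ga*(2*r-2*bc) = 2*r" "al*(2*r-2*ca)+be*(2*r-2*bc) = 2*r"
   "be*(1-wu)*(2*r-2*ab) + ga*(1-ws)*(2*r-2*ca) = r" "al*wu*(2*r-2*ab) + ga*(1-wp)*(2*r-2*bc) = r" "be*wp*(2*r-2*bc) + al*ws*(2*r-2*ca) = r"
  shows "be*(bc-r)*(ab-r)*(((1-ws)*(1-wu)*r + (1-ws)*wu*ab + ws*(1-wu)*ca + ws*wu*bc)
          - ((1-wp)*(1-ws)*ab + (1-wp)*ws*bc + wp*(1-ws)*ca + wp*ws*r)) = 0"
  using assms by algebra

lemma key:
  fixes al be ga r ab bc ca ws wu wp K1a K1b K1c K2a K2b K2c K3a K3b K3c :: real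
  assumes "al+be+ga=1"
   "al*r+be*ab+ga*ca=0" "al*ab+be*r+ga*bc=0" "al*ca+be*bc+ga*r=0"
   "al*K1a+be*K1b+ga*K1c=0" "al*K2a+be*K2b+ga*K2c=0" "al*K3a+be*K3b+ga*K3c=0"
   "2*K1a = r" "2*(ca-r)*(1-ws) = 2*K1c - r" "2*(ab-r)*(1-wu) = 2*K1b - r"
   "2*K2b = r" "2*(ab-r)*wu = 2*K2a - r" "2*(bc-r)*(1-wp) = 2*K2c - r"
   "2*K3c = r" "2*(bc-r)*wp = 2*K3b - r" "2*(ca-r)*ws = 2*K3a - r"
  shows "al*(ca-r)*(ab-r)*(((1-wp)*(1-ws)*ab + (1-wp)*ws*bc + wp*(1-ws)*ca + wp*ws*r)
          - ((1-wp)*(1-wu)*ab + (1-wp)*wu*r + wp*(1-wu)*ca + wp*wu*bc)) = 0"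
    and "be*(bc-r)*(ab-r)*(((1-ws)*(1-wu)*r + (1-ws)*wu*ab + ws*(1-wu)*ca + ws*wu*bc)
          - ((1-wp)*(1-ws)*ab + (1-wp)*ws*bc + wp*(1-ws)*ca + wp*ws*r)) = 0"
proof -
  define La where "La = 2*r-2*bc"
  define Lb where "Lb = 2*r-2*ca"
  define Lc where "Lc = 2*r-2*ab"
  have E1: "be*Lc+ga*Lb = 2*r" "al*Lc+ga*La = 2*r" "al*Lb+be*La = 2*r"
    using assms unfolding La_def Lb_def Lc_def by algebra+
  have E2: "be*(1-wu)*Lc + ga*(1-ws)*Lb = r" "al*wu*Lc + ga*(1-wp)*La = r" "be*wp*La + al*ws*Lb = r"
    using assms unfolding La_def Lb_def Lc_def by algebra+
  show "al*(ca-r)*(ab-r)*(((1-wp)*(1-ws)*ab + (1-wp)*ws*bc + wp*(1-ws)*ca + wp*ws*r)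
          - ((1-wp)*(1-wu)*ab + (1-wp)*wu*r + wp*(1-wu)*ca + wp*wu*bc)) = 0"
    using key_core[OF E1 E2] unfolding La_def Lb_def Lc_def by algebra
  show "be*(bc-r)*(ab-r)*(((1-ws)*(1-wu)*r + (1-ws)*wu*ab + ws*(1-wu)*ca + ws*wu*bc)
          - ((1-wp)*(1-ws)*ab + (1-wp)*ws*bc + wp*(1-ws)*ca + wp*ws*r)) = 0"
    using key_core2 E1 E2 unfolding La_def Lb_def Lc_def by blast
qed

lemma side:
  fixes wu w k y :: "real^2"
  assumes "inner wu wu = r" "inner w w = r" "inner wu wu = 2*inner k wu" "inner y y = 2*inner k y"
    "y = (1-ws) *\<^sub>R wu + ws *\<^sub>R w" "ws \<noteq> 0"
  shows "2*(inner w wu - r)*(1-ws) = 2*inner k w - r"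
proof -
  have uw: "inner w wu = inner wu w" by (rule inner_commute)
  have "inner y y = (1-ws)^2 * r + 2*ws*(1-ws)*inner wu w + ws^2 * r"
    using assms(1,2) unfolding assms(5)
    by (simp add: inner_simps inner_commute power2_eq_square algebra_simps)
  moreover have "inner k y = (1-ws)*inner k wu + ws * inner k w"
    unfolding assms(5) by (simp add: inner_simps)
  ultimately have "(1-ws)^2 * r + 2*ws*(1-ws)*inner wu w + ws^2 * r = (1-ws)*r + 2*ws*inner k w"
    using assms(1,3,4) by (simp add: algebra_simps)
  hence "ws * (2*(inner wu w - r)*(1-ws) - (2*inner k w - r)) = 0"
    by (simp add: algebra_simps power2_eq_square)
  thus ?thesis using assms(6) uw by simp
qed

lemma distc:
  fixes c U Q :: "real^2"
  assumes "dist c U = dist c Q"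
  shows "inner (U-Q) (U-Q) = 2*inner (c-Q) (U-Q)"
proof -
  have "norm ((c-Q) - (U-Q)) = norm (c-Q)" using assms by (simp add: dist_norm)
  hence "inner ((c-Q) - (U-Q)) ((c-Q) - (U-Q)) = inner (c-Q) (c-Q)"
    by (metis power2_norm_eq_inner)
  thus ?thesis by (simp add: inner_simps inner_commute algebra_simps)
qed

lemma hull_univ:
  fixes A B C :: "real^2"
  assumes "\<not> collinear {A, B, C}"
  shows "affine hull {A,B,C} = UNIV"
proof -
  have d: "A \<noteq> B" "A \<noteq> C" "B \<noteq> C" and ind: "\<not> affine_dependent {A,B,C}"
    using assms collinear_3_eq_affine_dependent by blast+
  have "card {A,B,C} = 3" using d by simp
  hence "aff_dim {A,B,C} = 2" using aff_dim_affine_independent[OF ind] by simp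
  thus ?thesis using aff_dim_eq_full[of "{A,B,C}"] by simp
qed

theorem theorem5:
  fixes A B C Q X Y Z :: "real^2"
  assumes "\<not> collinear {A, B, C}"
    and "dist Q A = dist Q B" and "dist Q B = dist Q C"
    and "Q \<notin> affine hull {B, C}" and "Q \<notin> affine hull {C, A}" and "Q \<notin> affine hull {A, B}"
    and "miquel_triangle Q A B C X Y Z"
  shows "is_orthocenter Q X Y Z"
proof -
  have miq: "\<not> collinear {X, Y, Z}" "X \<in> affine hull {B, C}" "Y \<in> affine hull {C, A}"
    "Z \<in> affine hull {A, B}" "on_circle_through Q A Y Z" "on_circle_through Q B Z X"
    "on_circle_through Q C X Y"
    using assms(7) unfolding miquel_triangle_def by auto
  define a where "a = A - Q"
  define b where "b = B - Q"
  define c where "c = C - Q"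
  define x where "x = X - Q"
  define y where "y = Y - Q"
  define z where "z = Z - Q"
  define r where "r = inner a a"
  define ab where "ab = inner a b"
  define bc where "bc = inner b c"
  define ca where "ca = inner c a"
  have cm: "inner a b = ab" "inner b a = ab" "inner b c = bc" "inner c b = bc"
    "inner c a = ca" "inner a c = ca" "inner a a = r"
    by (simp_all add: ab_def bc_def ca_def r_def inner_commute)
  have nab: "norm a = norm b" using assms(2) unfolding a_def b_def
    by (simp add: dist_norm norm_minus_commute)
  have nbc: "norm b = norm c" using assms(3) unfolding c_def b_def
    by (simp add: dist_norm norm_minus_commute)
  have rb: "inner b b = r" unfolding r_def using nab by (metis power2_norm_eq_inner)
  have rc: "inner c c = r" unfolding r_def using nab nbc by (metis power2_norm_eq_inner)
  have dAB: "A \<noteq> B" "A \<noteq> C" "B \<noteq> C" using assms(1) by (auto simp: collinear_2 insert_commute)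
  obtain al be ga where Qe: "Q = al *\<^sub>R A + be *\<^sub>R B + ga *\<^sub>R C" and s1: "al + be + ga = 1"
    using hull_univ[OF assms(1)] affine_hull_3[of A B C] by blast
  have z0: "al *\<^sub>R a + be *\<^sub>R b + ga *\<^sub>R c = 0"
  proof -
    have "al *\<^sub>R a + be *\<^sub>R b + ga *\<^sub>R c = (al *\<^sub>R A + be *\<^sub>R B + ga *\<^sub>R C) - (al + be + ga) *\<^sub>R Q"
      unfolding a_def b_def c_def by (simp add: algebra_simps)
    also have "\<dots> = 0" using Qe s1 by simp
    finally show ?thesis .
  qed
  have lin: "al * inner a v + be * inner b v + ga * inner c v = 0" for v
  proof -
    have "inner (al *\<^sub>R a + be *\<^sub>R b + ga *\<^sub>R c) v = 0" using z0 by simp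
    thus ?thesis by (simp add: inner_simps)
  qed
  have al0: "al \<noteq> 0"
  proof
    assume "al = 0"
    hence "Q = be *\<^sub>R B + ga *\<^sub>R C" "be + ga = 1" using Qe s1 by auto
    hence "Q \<in> affine hull {B, C}" unfolding affine_hull_2 by blast
    thus False using assms(4) by blast
  qed
  have be0: "be \<noteq> 0"
  proof
    assume "be = 0"
    hence "Q = ga *\<^sub>R C + al *\<^sub>R A" "ga + al = 1" using Qe s1 by auto
    hence "Q \<in> affine hull {C, A}" unfolding affine_hull_2 by blast
    thus False using assms(5) by blast
  qed
  have abr: "ab \<noteq> r"
  proof
    assume h: "ab = r"
    have "inner (a - b) (a - b) = 0" using h rb cm by (simp add: inner_simps)
    hence "a = b" by simp
    thus False using dAB unfolding a_def b_def by simp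
  qed
  have bcr: "bc \<noteq> r"
  proof
    assume h: "bc = r"
    have "inner (b - c) (b - c) = 0" using h rb rc cm by (simp add: inner_simps)
    hence "b = c" by simp
    thus False using dAB unfolding c_def b_def by simp
  qed
  have car: "ca \<noteq> r"
  proof
    assume h: "ca = r"
    have "inner (c - a) (c - a) = 0" using h rc cm by (simp add: inner_simps)
    hence "c = a" by simp
    thus False using dAB unfolding c_def a_def by simp
  qed
  obtain wp where Xe: "X = (1-wp) *\<^sub>R B + wp *\<^sub>R C"
    using miq(2) unfolding affine_hull_2 by (smt (verit) mem_Collect_eq)
  obtain ws where Ye: "Y = (1-ws) *\<^sub>R A + ws *\<^sub>R C"
    using miq(3) unfolding affine_hull_2 by (smt (verit) mem_Collect_eq add.commute)
  obtain wu where Ze: "Z = (1-wu) *\<^sub>R A + wu *\<^sub>R B"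
    using miq(4) unfolding affine_hull_2 by (smt (verit) mem_Collect_eq)
  have xe: "x = (1-wp) *\<^sub>R b + wp *\<^sub>R c"
    unfolding x_def b_def c_def Xe by (simp add: algebra_simps)
  have ye: "y = (1-ws) *\<^sub>R a + ws *\<^sub>R c"
    unfolding y_def a_def c_def Ye by (simp add: algebra_simps)
  have ze: "z = (1-wu) *\<^sub>R a + wu *\<^sub>R b"
    unfolding z_def a_def b_def Ze by (simp add: algebra_simps)
  have xe2: "x = (1-(1-wp)) *\<^sub>R c + (1-wp) *\<^sub>R b" using xe by (simp add: algebra_simps)
  have ye2: "y = (1-(1-ws)) *\<^sub>R c + (1-ws) *\<^sub>R a" using ye by (simp add: algebra_simps)
  have ze2: "z = (1-(1-wu)) *\<^sub>R b + (1-wu) *\<^sub>R a" using ze by (simp add: algebra_simps)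
  have c1: "\<not> collinear {A, Y, Z}" "\<exists>k. dist k A = dist k Y \<and> dist k A = dist k Z \<and> dist k A = dist k Q"
    using miq(5) unfolding on_circle_through_def by auto
  have c2: "\<not> collinear {B, Z, X}" "\<exists>k. dist k B = dist k Z \<and> dist k B = dist k X \<and> dist k B = dist k Q"
    using miq(6) unfolding on_circle_through_def by auto
  have c3: "\<not> collinear {C, X, Y}" "\<exists>k. dist k C = dist k X \<and> dist k C = dist k Y \<and> dist k C = dist k Q"
    using miq(7) unfolding on_circle_through_def by auto
  have ws0: "ws \<noteq> 0"
  proof
    assume "ws = 0" hence "Y = A" using Ye by simp
    thus False using c1(1) by (simp add: collinear_2)
  qed
  have wu0: "wu \<noteq> 0"
  proof
    assume "wu = 0" hence "Z = A" using Ze by simp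
    thus False using c1(1) by (simp add: collinear_2 insert_commute)
  qed
  have wu1: "1 - wu \<noteq> 0"
  proof
    assume "1 - wu = 0" hence "Z = B" using Ze by simp
    thus False using c2(1) by (simp add: collinear_2)
  qed
  have wp0: "wp \<noteq> 0"
  proof
    assume "wp = 0" hence "X = B" using Xe by simp
    thus False using c2(1) by (simp add: collinear_2 insert_commute)
  qed
  have wp1: "1 - wp \<noteq> 0"
  proof
    assume "1 - wp = 0" hence "X = C" using Xe by simp
    thus False using c3(1) by (simp add: collinear_2)
  qed
  have ws1: "1 - ws \<noteq> 0"
  proof
    assume "1 - ws = 0" hence "Y = C" using Ye by simp
    thus False using c3(1) by (simp add: collinear_2 insert_commute)
  qed
  obtain k1 where k1: "dist k1 A = dist k1 Y" "dist k1 A = dist k1 Z" "dist k1 A = dist k1 Q"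
    using c1(2) by blast
  obtain k2 where k2: "dist k2 B = dist k2 Z" "dist k2 B = dist k2 X" "dist k2 B = dist k2 Q"
    using c2(2) by blast
  obtain k3 where k3: "dist k3 C = dist k3 X" "dist k3 C = dist k3 Y" "dist k3 C = dist k3 Q"
    using c3(2) by blast
  have d1: "inner a a = 2*inner (k1-Q) a" "inner y y = 2*inner (k1-Q) y" "inner z z = 2*inner (k1-Q) z"
    using distc[of k1 A Q] distc[of k1 Y Q] distc[of k1 Z Q] k1 unfolding a_def y_def z_def by auto
  have d2: "inner b b = 2*inner (k2-Q) b" "inner z z = 2*inner (k2-Q) z" "inner x x = 2*inner (k2-Q) x"
    using distc[of k2 B Q] distc[of k2 Z Q] distc[of k2 X Q] k2 unfolding b_def x_def z_def by auto
  have d3: "inner c c = 2*inner (k3-Q) c" "inner x x = 2*inner (k3-Q) x" "inner y y = 2*inner (k3-Q) y"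
    using distc[of k3 C Q] distc[of k3 X Q] distc[of k3 Y Q] k3 unfolding c_def x_def y_def by auto
  have ra: "inner a a = r" by (simp add: r_def)
  have e1: "2*(ca-r)*(1-ws) = 2*inner (k1-Q) c - r"
    using side[OF ra rc d1(1) d1(2) ye ws0] cm by simp
  have e2: "2*(ab-r)*(1-wu) = 2*inner (k1-Q) b - r"
    using side[OF ra rb d1(1) d1(3) ze wu0] cm by simp
  have e3: "2*(ab-r)*wu = 2*inner (k2-Q) a - r"
    using side[OF rb ra d2(1) d2(2) ze2 wu1] cm by simp
  have e4: "2*(bc-r)*(1-wp) = 2*inner (k2-Q) c - r"
    using side[OF rb rc d2(1) d2(3) xe wp0] cm by simp
  have e5: "2*(bc-r)*wp = 2*inner (k3-Q) b - r"
    using side[OF rc rb d3(1) d3(2) xe2 wp1] cm by simp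
  have e6: "2*(ca-r)*ws = 2*inner (k3-Q) a - r"
    using side[OF rc ra d3(1) d3(3) ye2 ws1] cm by simp
  have f1: "2*inner (k1-Q) a = r" using d1(1) ra by simp
  have f2: "2*inner (k2-Q) b = r" using d2(1) rb by simp
  have f3: "2*inner (k3-Q) c = r" using d3(1) rc by simp
  have l1: "al*inner (k1-Q) a+be*inner (k1-Q) b+ga*inner (k1-Q) c=0"
    using lin[of "k1-Q"] by (simp add: inner_commute)
  have l2: "al*inner (k2-Q) a+be*inner (k2-Q) b+ga*inner (k2-Q) c=0"
    using lin[of "k2-Q"] by (simp add: inner_commute)
  have l3: "al*inner (k3-Q) a+be*inner (k3-Q) b+ga*inner (k3-Q) c=0"
    using lin[of "k3-Q"] by (simp add: inner_commute)
  have m1: "al*r+be*ab+ga*ca=0" using lin[of a] cm rb rc by (simp add: inner_commute)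
  have m2: "al*ab+be*r+ga*bc=0" using lin[of b] cm rb rc by (simp add: inner_commute)
  have m3: "al*ca+be*bc+ga*r=0" using lin[of c] cm rb rc by (simp add: inner_commute)
  note K = key[OF s1 m1 m2 m3 l1 l2 l3 f1 e1 e2 f2 e3 e4 f3 e5 e6]
  have xy: "inner x y = (1-wp)*(1-ws)*ab + (1-wp)*ws*bc + wp*(1-ws)*ca + wp*ws*r"
    unfolding xe ye by (simp add: inner_simps cm rb rc algebra_simps)
  have xz: "inner x z = (1-wp)*(1-wu)*ab + (1-wp)*wu*r + wp*(1-wu)*ca + wp*wu*bc"
    unfolding xe ze by (simp add: inner_simps cm rb rc algebra_simps)
  have yz: "inner y z = (1-ws)*(1-wu)*r + (1-ws)*wu*ab + ws*(1-wu)*ca + ws*wu*bc"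
    unfolding ye ze by (simp add: inner_simps cm rb rc algebra_simps)
  have g1: "inner x y = inner x z" using K(1) al0 abr car xy xz by simp
  have g2: "inner y z = inner x y" using K(2) be0 abr bcr xy yz by simp
  have QX: "Q - X = - x" "Q - Y = - y" "Q - Z = - z" "Y - Z = y - z" "Z - X = z - x" "X - Y = x - y"
    unfolding x_def y_def z_def by auto
  show ?thesis unfolding is_orthocenter_def QX
    using miq(1) g1 g2 by (simp add: inner_simps inner_commute)
qed

end
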